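(* Let $\pi$ be a projective plane of order $q$ and let $n>1$ be a natural number. Then any embedding $\phi$ of the complete bipartite graph $K_{s,t}$ into $\pi$, where $s\ge q-n$ and $t>n^2+n+1$, maps the vertex class of size $t$ to a set of points lying on a single line.
   Context: A finite projective plane of order $q$ has $q^2+q+1$ points and lines, $q+1$ points on each line and $q+1$ lines through each point; any two distinct points lie on a unique line and any two lines meet in a unique point. An embedding of a simple graph $G=(V,E)$ into $\pi$ is an injective map $\phi$ from $V$ to the points of $\pi$ such that the induced map sending an edge $ab$ to the line through $\phi(a),\phi(b)$ is injective on $E$. *)

theory Defs
  imports Main
begin

(* A projective plane of order q, lines represented as sets of points
   (incidence = membership). *)
definition projective_plane :: "'p set \<Rightarrow> 'p set set \<Rightarrow> nat \<Rightarrow> bool" where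
  "projective_plane P L q \<longleftrightarrow>
     finite P \<and> (\<forall>l\<in>L. l \<subseteq> P) \<and>
     card P = q^2 + q + 1 \<and> card L = q^2 + q + 1 \<and>
     (\<forall>l\<in>L. card l = q + 1) \<and>
     (\<forall>p\<in>P. card {l\<in>L. p \<in> l} = q + 1) \<and>
     (\<forall>p\<in>P. \<forall>r\<in>P. p \<noteq> r \<longrightarrow> (\<exists>!l. l \<in> L \<and> p \<in> l \<and> r \<in> l)) \<and>
     (\<forall>l\<in>L. \<forall>m\<in>L. l \<noteq> m \<longrightarrow> (\<exists>!p. p \<in> P \<and> p \<in> l \<and> p \<in> m))"

definition edge_line :: "'p set set \<Rightarrow> ('v \<Rightarrow> 'p) \<Rightarrow> 'v set \<Rightarrow> 'p set" where
  "edge_line L \<phi> e = (THE l. l \<in> L \<and> \<phi> ` e \<subseteq> l)"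

definition graph_embedding ::
  "'p set \<Rightarrow> 'p set set \<Rightarrow> 'v set \<Rightarrow> 'v set set \<Rightarrow> ('v \<Rightarrow> 'p) \<Rightarrow> bool" where
  "graph_embedding P L V E \<phi> \<longleftrightarrow>
     inj_on \<phi> V \<and> \<phi> ` V \<subseteq> P \<and> inj_on (edge_line L \<phi>) E"

definition complete_bipartite_edges :: "'v set \<Rightarrow> 'v set \<Rightarrow> 'v set set" where
  "complete_bipartite_edges A B = {{a, b} | a b. a \<in> A \<and> b \<in> B}"

end

theory Submission
  imports Defs
begin

theorem corollary4p5:
  fixes P :: "'p set" and L :: "'p set set" and q n s t :: nat
    and A B :: "'v set" and \<phi> :: "'v \<Rightarrow> 'p"
  assumes "projective_plane P L q"
    and "n > 1"
    and "finite A" "finite B" "A \<inter> B = {}"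
    and "card A = s" "card B = t"
    and "s \<ge> q - n" "t > n^2 + n + 1"
    and "graph_embedding P L (A \<union> B) (complete_bipartite_edges A B) \<phi>"
  shows "\<exists>l\<in>L. \<phi> ` B \<subseteq> l"
proof (rule ccontr)
  assume neg: "\<not> (\<exists>l\<in>L. \<phi> ` B \<subseteq> l)"
  have finP: "finite P" and sub: "\<forall>l\<in>L. l \<subseteq> P" and cardL: "card L = q^2+q+1"
    and cl: "\<forall>p\<in>P. card {l\<in>L. p \<in> l} = q + 1"
    and uniq: "\<forall>p\<in>P. \<forall>r\<in>P. p \<noteq> r \<longrightarrow> (\<exists>!l. l \<in> L \<and> p \<in> l \<and> r \<in> l)"
    using assms(1) unfolding projective_plane_def by auto
  have finL: "finite L" using cardL by (intro card_ge_0_finite) simp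
  have injV: "inj_on \<phi> (A \<union> B)" and imV: "\<phi> ` (A \<union> B) \<subseteq> P"
    and injE: "inj_on (edge_line L \<phi>) (complete_bipartite_edges A B)"
    using assms(10) unfolding graph_embedding_def by auto
  define ln where "ln x y = (THE l. l \<in> L \<and> x \<in> l \<and> y \<in> l)" for x y
  have ln: "ln x y \<in> L \<and> x \<in> ln x y \<and> y \<in> ln x y" if "x\<in>P" "y\<in>P" "x\<noteq>y" for x y
    unfolding ln_def using theI'[OF uniq[rule_format, OF that]] .
  have ln_eq: "ln x y = l" if "x\<in>P" "y\<in>P" "x\<noteq>y" "l\<in>L" "x\<in>l" "y\<in>l" for x y l
    unfolding ln_def using the1_equality[OF uniq[rule_format, OF that(1-3)]] that(4-6) by blast
  have neqAB: "\<phi> a \<noteq> \<phi> b" if "a\<in>A" "b\<in>B" for a b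
  proof
    assume "\<phi> a = \<phi> b"
    then have "a = b" using inj_onD[OF injV] that by auto
    then show False using that assms(5) by auto
  qed
  have el: "edge_line L \<phi> {a,b} = l" if "a\<in>A" "b\<in>B" "l\<in>L" "\<phi> a \<in> l" "\<phi> b \<in> l" for a b l
  proof -
    have pa: "\<phi> a \<in> P" "\<phi> b \<in> P" using imV that by auto
    have "(THE l. l \<in> L \<and> \<phi> ` {a,b} \<subseteq> l) = l"
      using the1_equality[OF uniq[rule_format, OF pa neqAB[OF that(1,2)]]] that by auto
    then show ?thesis unfolding edge_line_def .
  qed
  have edge_inj: "a = a' \<and> b = b'" if "a\<in>A" "b\<in>B" "a'\<in>A" "b'\<in>B"
    "edge_line L \<phi> {a,b} = edge_line L \<phi> {a',b'}" for a b a' b'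
  proof -
    have "{a,b} \<in> complete_bipartite_edges A B" "{a',b'} \<in> complete_bipartite_edges A B"
      using that unfolding complete_bipartite_edges_def by auto
    then have "{a,b} = {a',b'}" using injE that(5) by (meson inj_onD)
    then show ?thesis using that(1-4) assms(5) by (auto simp: doubleton_eq_iff)
  qed
  define S where "S b = {l\<in>L. b \<in> l \<and> (\<exists>x\<in>\<phi>`B. x \<noteq> b \<and> x \<in> l)}" for b
  have finS: "finite (S b)" for b unfolding S_def using finL by simp
  have L1: "card (S b) \<le> n + 1" if bB: "b \<in> \<phi>`B" for b
  proof -
    obtain \<beta> where \<beta>: "\<beta>\<in>B" "b = \<phi> \<beta>" using bB by auto
    have bP: "b \<in> P" using imV \<beta> by auto
    define f where "f a = ln (\<phi> a) b" for a
    have fa: "f a \<in> L \<and> \<phi> a \<in> f a \<and> b \<in> f a" if "a\<in>A" for a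
      unfolding f_def using ln imV that bP neqAB[OF that \<beta>(1)] \<beta> by auto
    have fe: "edge_line L \<phi> {a,\<beta>} = f a" if "a\<in>A" for a
      using el[OF that \<beta>(1)] fa[OF that] \<beta> by auto
    have inj: "inj_on f A"
    proof
      fix a a' assume "a\<in>A" "a'\<in>A" "f a = f a'"
      then have "edge_line L \<phi> {a,\<beta>} = edge_line L \<phi> {a',\<beta>}" using fe by simp
      then show "a = a'" using edge_inj \<open>a\<in>A\<close> \<open>a'\<in>A\<close> \<beta>(1) by blast
    qed
    have disj: "f ` A \<inter> S b = {}"
    proof (rule ccontr)
      assume "f ` A \<inter> S b \<noteq> {}"
      then obtain a x where a: "a\<in>A" "f a \<in> S b" by auto
      then obtain \<beta>' where "\<beta>'\<in>B" "\<phi> \<beta>' \<noteq> b" "\<phi> \<beta>' \<in> f a" unfolding S_def by auto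
      moreover have "edge_line L \<phi> {a,\<beta>'} = f a"
        using el[OF a(1) \<open>\<beta>'\<in>B\<close>] fa[OF a(1)] calculation by auto
      then have "edge_line L \<phi> {a,\<beta>} = edge_line L \<phi> {a,\<beta>'}" using fe[OF a(1)] by simp
      then have "\<beta> = \<beta>'" using edge_inj[OF a(1) \<beta>(1) a(1) \<open>\<beta>'\<in>B\<close>] by blast
      then show False using \<open>\<phi> \<beta>' \<noteq> b\<close> \<beta>(2) by simp
    qed
    have "f ` A \<union> S b \<subseteq> {l\<in>L. b \<in> l}" using fa unfolding S_def by auto
    then have "card (f ` A \<union> S b) \<le> card {l\<in>L. b \<in> l}"
      by (rule card_mono[rotated]) (use finL in simp)
    then have "card (f ` A \<union> S b) \<le> q + 1" using cl bP by simp
    moreover have "card (f ` A \<union> S b) = s + card (S b)"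
      using card_Un_disjoint[OF _ finS disj] card_image[OF inj] assms(3,6) by simp
    moreover have "q \<le> s + n" using assms(8) by simp
    ultimately show ?thesis by linarith
  qed
  have L2: "card (l \<inter> \<phi>`B) \<le> n + 1" if "l \<in> L" for l
  proof -
    have "\<not> \<phi>`B \<subseteq> l" using neg that by (simp add: Bex_def)
    then obtain c where c: "c \<in> \<phi>`B" "c \<notin> l" by (meson subsetI)
    have cP: "c \<in> P" using c imV by auto
    define g where "g x = ln c x" for x
    have gx: "g x \<in> L \<and> c \<in> g x \<and> x \<in> g x" if "x \<in> l \<inter> \<phi>`B" for x
    proof -
      have "x \<in> P" using sub \<open>l\<in>L\<close> that by blast
      moreover have "c \<noteq> x" using that c(2) by blast
      ultimately show ?thesis unfolding g_def using ln[OF cP] by blast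
    qed
    have "inj_on g (l \<inter> \<phi>`B)"
    proof
      fix x y assume xy: "x \<in> l \<inter> \<phi>`B" "y \<in> l \<inter> \<phi>`B" "g x = g y"
      show "x = y"
      proof (rule ccontr)
        assume "x \<noteq> y"
        have xP: "x\<in>P" "y\<in>P" using xy sub \<open>l\<in>L\<close> by auto
        have "ln x y = l" using ln_eq[OF xP \<open>x\<noteq>y\<close> \<open>l\<in>L\<close>] xy by auto
        moreover have "ln x y = g x" using ln_eq[OF xP \<open>x\<noteq>y\<close>, of "g x"] gx[OF xy(1)] gx[OF xy(2)] xy(3) by simp
        ultimately show False using gx[OF xy(1)] c(2) by simp
      qed
    qed
    moreover have "g ` (l \<inter> \<phi>`B) \<subseteq> S c"
    proof
      fix m assume "m \<in> g ` (l \<inter> \<phi>`B)"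
      then obtain x where x: "x \<in> l \<inter> \<phi>`B" "m = g x" by blast
      have "x \<noteq> c" using x c(2) by blast
      then show "m \<in> S c" unfolding S_def using gx[OF x(1)] x by blast
    qed
    ultimately have "card (l \<inter> \<phi>`B) \<le> card (S c)" using card_inj_on_le[OF _ _ finS] by blast
    then show ?thesis using L1[OF c(1)] by simp
  qed
  have "B \<noteq> {}" using assms(7,9) by auto
  then obtain b where b: "b \<in> \<phi>`B" by auto
  have bP: "b \<in> P" using b imV by auto
  have cov: "\<phi>`B - {b} \<subseteq> (\<Union>l\<in>S b. l \<inter> \<phi>`B - {b})"
  proof
    fix x assume x: "x \<in> \<phi>`B - {b}"
    have xP: "x \<in> P" using x imV by auto
    have "ln b x \<in> S b" using ln[OF bP xP] x unfolding S_def by auto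
    then show "x \<in> (\<Union>l\<in>S b. l \<inter> \<phi>`B - {b})" using ln[OF bP xP] x by auto
  qed
  have "card (\<phi>`B - {b}) \<le> card (\<Union>l\<in>S b. l \<inter> \<phi>`B - {b})"
    using cov finS assms(4) by (intro card_mono) auto
  also have "\<dots> \<le> (\<Sum>l\<in>S b. card (l \<inter> \<phi>`B - {b}))" using finS by (rule card_UN_le)
  also have "\<dots> \<le> (\<Sum>l\<in>S b. n)"
  proof (rule sum_mono)
    fix l assume l: "l \<in> S b"
    then have "b \<in> l \<inter> \<phi>`B" "l \<in> L" using b unfolding S_def by auto
    show "card (l \<inter> \<phi>`B - {b}) \<le> n"
    proof -
      have "card (l \<inter> \<phi>`B - {b}) = card (l \<inter> \<phi>`B) - 1"
        using \<open>b \<in> l \<inter> \<phi>`B\<close> by (simp add: card_Diff_singleton)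
      then show ?thesis using L2[OF \<open>l\<in>L\<close>] by simp
    qed
  qed
  also have "\<dots> = card (S b) * n" by simp
  also have "\<dots> \<le> (n+1) * n" using L1[OF b] by (rule mult_right_mono) simp
  finally have le: "card (\<phi>`B - {b}) \<le> (n+1)*n" .
  have "card (\<phi>`B) = t" proof -
    have "inj_on \<phi> B" using inj_on_subset[OF injV] by blast
    then show ?thesis using card_image assms(7) by metis
  qed
  then have "card (\<phi>`B - {b}) = t - 1" using b by simp
  moreover have "(n+1)*n = n^2 + n" by (simp add: power2_eq_square)
  ultimately show False using le assms(9) by linarith
qed

end
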